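(* Under the hypotheses of Lemma 2 (an RB function $H$ for $\mathcal X_r$, a constant $\eta\ge\max_{p\in\mathcal Q}H(\mathbf f[p])$, and a $1-\epsilon$ confidence region $\mathcal V$ with associated set $V$, for a given $n$-round device behavior $P_{A\mid X}$ and input distribution $\Pi$), there exists a conditional distribution $\tilde P(\cdot\mid\vec x)$ on $\mathcal A^n\cup\{\perp\}$ (with $\perp$ an additional "abort" symbol) such that, setting $\tilde P(\vec a,\vec x)=\tilde P(\vec a\mid\vec x)\Pi(\vec x)$ and $P(\perp\mid\vec x)=0$, $$\frac12\sum_{\vec a\in\mathcal A^n\cup\{\perp\},\vec x}\big|\tilde P(\vec a,\vec x)-P(\vec a,\vec x)\big|\le\epsilon,$$ and for every $\vec x\in\mathcal X^n$ and every $\vec a\in\mathcal A^n$ (i.e. $\vec a\neq\perp$), $$-\log_2\tilde P(\vec a\mid\vec x)\ge nH(\mathcal V(\vec a,\vec x,\epsilon))-\nu(\vec x)\eta$$ (with $-\log_20=+\infty$).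
   Context: Setting. A Bell device consists of $k$ boxes with finite input sets $\mathcal X_i$ and output sets $\mathcal A_i$; $\mathcal X=\prod_i\mathcal X_i$, $\mathcal A=\prod_i\mathcal A_i$. Single-round behaviors $p=(p(a\mid x))$; $\mathcal Q$ the set of quantum behaviors. Bell expressions $f$ with $f[p]=\sum_{a,x}f(a,x)p(a\mid x)$; $\mathbf f=(f_1,\dots,f_t)$, $\mathbf f[\mathcal Q]=\{\mathbf f[p]:p\in\mathcal Q\}$. $n$-round device behavior: $P(\vec a\mid\vec x)=\prod_{j=1}^np_{\vec a_{j-1},\vec x_{j-1}}(a_j\mid x_j)$ with each $p_{\vec a_{j-1},\vec x_{j-1}}\in\mathcal Q$ ($\vec a_j,\vec x_j$ the length-$j$ prefixes). Inputs drawn with $\Pi(\vec x)=\prod_j\pi(x_j)$; $P(\vec a,\vec x)=P(\vec a\mid\vec x)\Pi(\vec x)$. RB function for nonempty $\mathcal X_r\subseteq\mathcal X$: $H:\mathbf f[\mathcal Q]\to[0,\log_2|\mathcal A|]$ with (1) $\min_{a\in\mathcal A,x\in\mathcal X_r}(-\log_2p(a\mid x))\ge H(\mathbf f[p])$ for all $p\in\mathcal Q$, (2) $H$ convex along $\mathbf f[\mathcal Q]$: $H(q\mathbf f[p_1]+(1-q)\mathbf f[p_2])\le qH(\mathbf f[p_1])+(1-q)H(\mathbf f[p_2])$. For $\mathcal V\subseteq\mathbb R^t$, $H(\mathcal V)$ is a fixed number $\le\inf\{H(\mathbf y):\mathbf y\in\mathbf f[\mathcal Q]\cap\mathcal V\}$,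 equal to $0$ if the intersection is empty. $\nu(\vec x)=\#\{j:x_j\notin\mathcal X_r\}$. A $1-\epsilon$ confidence region is an assignment $(\vec a,\vec x)\mapsto\mathcal V(\vec a,\vec x,\epsilon)\subseteq\mathbb R^t$ with $\Pr_{P_{AX}}[\frac1n\sum_j\mathbf f[p_{\vec a_{j-1},\vec x_{j-1}}]\in\mathcal V(\vec a,\vec x,\epsilon)]\ge1-\epsilon$ for every $n$-round device behavior; $V$ is the set of $(\vec a,\vec x)$ for which this membership holds. *)

theory Defs
  imports "HOL-Analysis.Analysis"
begin

text \<open>Outputs of the whole Bell device (the product set A) are the finite type 'a,
inputs (the product set X) the finite type 'x. A single-round behavior is
p :: 'a => 'x => real with p a x = p(a|x). Bell expressions are indexed by the
finite type 't, so f[p] is a vector in real^'t.\<close>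

definition behavior :: "('a::finite \<Rightarrow> 'x::finite \<Rightarrow> real) \<Rightarrow> bool" where
  "behavior p \<longleftrightarrow> (\<forall>a x. 0 \<le> p a x) \<and> (\<forall>x. (\<Sum>a\<in>UNIV. p a x) = 1)"

definition bell_vec ::
  "('t::finite \<Rightarrow> 'a::finite \<Rightarrow> 'x::finite \<Rightarrow> real) \<Rightarrow> ('a \<Rightarrow> 'x \<Rightarrow> real) \<Rightarrow> real^'t" where
  "bell_vec f p = (\<chi> s. \<Sum>a\<in>UNIV. \<Sum>x\<in>UNIV. f s a x * p a x)"

definition neglog2 :: "real \<Rightarrow> ereal" where
  "neglog2 u = (if u = 0 then \<infinity> else ereal (- log 2 u))"

definition RB_function ::
  "('a::finite \<Rightarrow> 'x::finite \<Rightarrow> real) set \<Rightarrow> ('t::finite \<Rightarrow> 'a \<Rightarrow> 'x \<Rightarrow> real) \<Rightarrow> 'x set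
   \<Rightarrow> (real^'t \<Rightarrow> real) \<Rightarrow> bool" where
  "RB_function Q f Xr H \<longleftrightarrow>
     Xr \<noteq> {} \<and>
     (\<forall>p\<in>Q. 0 \<le> H (bell_vec f p) \<and> H (bell_vec f p) \<le> log 2 (real (card (UNIV::'a set)))) \<and>
     (\<forall>p\<in>Q. \<forall>a. \<forall>x\<in>Xr. ereal (H (bell_vec f p)) \<le> neglog2 (p a x)) \<and>
     (\<forall>p1\<in>Q. \<forall>p2\<in>Q. \<forall>q\<in>{0..1}.
        H (q *\<^sub>R bell_vec f p1 + (1 - q) *\<^sub>R bell_vec f p2)
          \<le> q * H (bell_vec f p1) + (1 - q) * H (bell_vec f p2))"

text \<open>HV V plays the role of H(V): a fixed number below H on f[Q] \<inter> V, and 0 if that is empty.\<close>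
definition HV_of ::
  "('a::finite \<Rightarrow> 'x::finite \<Rightarrow> real) set \<Rightarrow> ('t::finite \<Rightarrow> 'a \<Rightarrow> 'x \<Rightarrow> real)
   \<Rightarrow> (real^'t \<Rightarrow> real) \<Rightarrow> ((real^'t) set \<Rightarrow> real) \<Rightarrow> bool" where
  "HV_of Q f H HV \<longleftrightarrow>
     (\<forall>V. (\<forall>y \<in> bell_vec f ` Q \<inter> V. HV V \<le> H y) \<and> (bell_vec f ` Q \<inter> V = {} \<longrightarrow> HV V = 0))"

definition nu :: "'x set \<Rightarrow> 'x list \<Rightarrow> nat" where
  "nu Xr xs = card {j. j < length xs \<and> xs ! j \<notin> Xr}"

text \<open>n-round device behavior: pp as xs is the round-(j+1) behavior given the
length-j prefixes as, xs; it must lie in Q.\<close>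
definition device_behavior ::
  "('a::finite \<Rightarrow> 'x::finite \<Rightarrow> real) set \<Rightarrow> nat \<Rightarrow> ('a list \<Rightarrow> 'x list \<Rightarrow> 'a \<Rightarrow> 'x \<Rightarrow> real) \<Rightarrow> bool" where
  "device_behavior Q n pp \<longleftrightarrow>
     (\<forall>as xs. length as = length xs \<longrightarrow> length as < n \<longrightarrow> pp as xs \<in> Q)"

definition dev_prob ::
  "nat \<Rightarrow> ('a list \<Rightarrow> 'x list \<Rightarrow> 'a \<Rightarrow> 'x \<Rightarrow> real) \<Rightarrow> 'a list \<Rightarrow> 'x list \<Rightarrow> real" where
  "dev_prob n pp as xs = (\<Prod>j<n. pp (take j as) (take j xs) (as ! j) (xs ! j))"

definition input_prob :: "('x \<Rightarrow> real) \<Rightarrow> 'x list \<Rightarrow> real" where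
  "input_prob \<pi> xs = prod_list (map \<pi> xs)"

definition avg_bell ::
  "('t::finite \<Rightarrow> 'a::finite \<Rightarrow> 'x::finite \<Rightarrow> real) \<Rightarrow> nat
   \<Rightarrow> ('a list \<Rightarrow> 'x list \<Rightarrow> 'a \<Rightarrow> 'x \<Rightarrow> real) \<Rightarrow> 'a list \<Rightarrow> 'x list \<Rightarrow> real^'t" where
  "avg_bell f n pp as xs = (1 / real n) *\<^sub>R (\<Sum>j<n. bell_vec f (pp (take j as) (take j xs)))"

definition confidence_region ::
  "('a::finite \<Rightarrow> 'x::finite \<Rightarrow> real) set \<Rightarrow> ('t::finite \<Rightarrow> 'a \<Rightarrow> 'x \<Rightarrow> real) \<Rightarrow> ('x \<Rightarrow> real)
   \<Rightarrow> nat \<Rightarrow> real \<Rightarrow> ('a list \<Rightarrow> 'x list \<Rightarrow> real \<Rightarrow> (real^'t) set) \<Rightarrow> bool" where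
  "confidence_region Q f \<pi> n \<epsilon> Vr \<longleftrightarrow>
     (\<forall>pp. device_behavior Q n pp \<longrightarrow>
        (\<Sum>(as, xs) \<in> {(as, xs). length as = n \<and> length xs = n \<and> avg_bell f n pp as xs \<in> Vr as xs \<epsilon>}.
            dev_prob n pp as xs * input_prob \<pi> xs) \<ge> 1 - \<epsilon>)"

text \<open>Outcome space A^n \<union> {abort}: None is the abort symbol.\<close>
definition outcomes :: "nat \<Rightarrow> 'a list option set" where
  "outcomes n = insert None (Some ` {as. length as = n})"

definition ext_prob ::
  "nat \<Rightarrow> ('a list \<Rightarrow> 'x list \<Rightarrow> 'a \<Rightarrow> 'x \<Rightarrow> real) \<Rightarrow> 'x list \<Rightarrow> 'a list option \<Rightarrow> real" where
  "ext_prob n pp xs oc = (case oc of None \<Rightarrow> 0 | Some as \<Rightarrow> dev_prob n pp as xs)"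

end

theory Submission
  imports Defs
begin


lemma fin_len: "finite {xs::'a::finite list. length xs = n}"
  using finite_lists_length_eq[of "UNIV::'a set" n] by simp

lemma lists_snoc: "{xs::'a list. length xs = Suc n} = (\<lambda>(ys,y). ys @ [y]) ` ({ys. length ys = n} \<times> UNIV)"
proof
  show "{xs::'a list. length xs = Suc n} \<subseteq> (\<lambda>(ys,y). ys @ [y]) ` ({ys. length ys = n} \<times> UNIV)"
  proof
    fix xs :: "'a list" assume "xs \<in> {xs. length xs = Suc n}"
    then have l: "length xs = Suc n" by simp
    then have "xs \<noteq> []" by auto
    then have "xs = butlast xs @ [last xs]" by simp
    moreover have "length (butlast xs) = n" using l by simp
    ultimately show "xs \<in> (\<lambda>(ys,y). ys @ [y]) ` ({ys. length ys = n} \<times> UNIV)"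
      by (intro image_eqI[of _ _ "(butlast xs, last xs)"]) auto
  qed
qed auto

lemma sum_lists_snoc: "(\<Sum>xs\<in>{xs::'a::finite list. length xs = Suc n}. g xs)
   = (\<Sum>ys\<in>{ys. length ys = n}. \<Sum>y\<in>UNIV. g (ys @ [y]))"
proof -
  have inj: "inj_on (\<lambda>(ys,y). ys @ [y]) ({ys::'a list. length ys = n} \<times> UNIV)"
    by (auto simp: inj_on_def)
  have "(\<Sum>xs\<in>{xs::'a::finite list. length xs = Suc n}. g xs) = (\<Sum>(ys,y)\<in>{ys::'a list. length ys = n} \<times> UNIV. g (ys @ [y]))"
    unfolding lists_snoc sum.reindex[OF inj] by (simp add: case_prod_unfold)
  also have "\<dots> = (\<Sum>ys\<in>{ys. length ys = n}. \<Sum>y\<in>UNIV. g (ys @ [y]))"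
    by (rule sum.cartesian_product[symmetric])
  finally show ?thesis .
qed

lemma input_sum: "(\<Sum>xs\<in>{xs::'x::finite list. length xs = n}. input_prob \<pi> xs) = (\<Sum>x\<in>UNIV. \<pi> x)^n"
proof (induction n)
  case 0
  have "{xs::'x list. length xs = 0} = {[]}" by auto
  then show ?case by (simp add: input_prob_def)
next
  case (Suc n)
  have "(\<Sum>xs\<in>{xs::'x list. length xs = Suc n}. input_prob \<pi> xs)
     = (\<Sum>ys\<in>{ys::'x list. length ys = n}. \<Sum>y\<in>UNIV. input_prob \<pi> ys * \<pi> y)"
    unfolding sum_lists_snoc by (simp add: input_prob_def)
  also have "\<dots> = (\<Sum>ys\<in>{ys::'x list. length ys = n}. input_prob \<pi> ys) * (\<Sum>y\<in>UNIV. \<pi> y)"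
    by (simp add: sum_distrib_left[symmetric] sum_distrib_right)
  finally show ?case using Suc by simp
qed

lemma dev_snoc:
  assumes "length ys = m"
  shows "dev_prob (Suc m) pp (ys @ [y]) xs = dev_prob m pp ys xs * pp ys (take m xs) y (xs ! m)"
proof -
  have "(\<Prod>j<m. pp (take j (ys @ [y])) (take j xs) ((ys @ [y]) ! j) (xs ! j))
      = (\<Prod>j<m. pp (take j ys) (take j xs) (ys ! j) (xs ! j))"
    by (rule prod.cong) (auto simp: assms nth_append)
  then show ?thesis by (simp add: dev_prob_def assms nth_append)
qed

lemma dev_sum:
  assumes QB: "\<forall>p\<in>Q. behavior p" and dev: "device_behavior Q N pp"
  shows "m \<le> N \<Longrightarrow> length xs \<ge> m \<Longrightarrow>
     (\<Sum>as\<in>{as::'a::finite list. length as = m}. dev_prob m pp as (xs::'x::finite list)) = 1"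
proof (induction m)
  case 0
  have "{xs::'a list. length xs = 0} = {[]}" by auto
  then show ?case by (simp add: dev_prob_def)
next
  case (Suc m)
  have "(\<Sum>as\<in>{as::'a list. length as = Suc m}. dev_prob (Suc m) pp as xs)
     = (\<Sum>ys\<in>{ys::'a list. length ys = m}. \<Sum>y\<in>UNIV. dev_prob m pp ys xs * pp ys (take m xs) y (xs ! m))"
    unfolding sum_lists_snoc by (simp add: dev_snoc)
  also have "\<dots> = (\<Sum>ys\<in>{ys::'a list. length ys = m}. dev_prob m pp ys xs)"
  proof (rule sum.cong)
    fix ys assume "ys \<in> {ys::'a list. length ys = m}"
    then have "pp ys (take m xs) \<in> Q" using dev Suc.prems unfolding device_behavior_def by auto
    then have "(\<Sum>y\<in>UNIV. pp ys (take m xs) y (xs ! m)) = 1" using QB unfolding behavior_def by auto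
    then show "(\<Sum>y\<in>UNIV. dev_prob m pp ys xs * pp ys (take m xs) y (xs ! m)) = dev_prob m pp ys xs"
      by (simp add: sum_distrib_left[symmetric])
  qed simp
  finally show ?case using Suc by simp
qed

lemma bell_lin: "bell_vec f (\<lambda>a x. c * g a x + d * h a x) = c *\<^sub>R bell_vec f g + d *\<^sub>R bell_vec f h"
  by (simp add: bell_vec_def vec_eq_iff algebra_simps sum.distrib sum_distrib_left)

lemma bell_avg: "bell_vec f (\<lambda>a x. (1/real m) * (\<Sum>j<m. P j a x)) = (1/real m) *\<^sub>R (\<Sum>j<m. bell_vec f (P j))"
  by (simp add: bell_vec_def vec_eq_iff sum_component sum_distrib_left sum_distrib_right
      algebra_simps sum.swap[of _ "{..<m}"])

lemma log_prod: "(\<forall>j\<in>A. 0 < c j) \<Longrightarrow> log b (\<Prod>j\<in>A. c j) = (\<Sum>j\<in>A. log b (c j))"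
proof (induction A rule: infinite_finite_induct)
  case (insert x F)
  then have "0 < prod c F" "0 < c x" by (auto intro: prod_pos)
  have "log b (prod c (insert x F)) = log b (c x * prod c F)" using insert by simp
  also have "\<dots> = log b (c x) + log b (prod c F)" by (rule log_mult_pos) fact+
  finally show ?case using insert by simp
next
  case (infinite A) then show ?case by simp
qed simp



lemma jensen:
  fixes Q :: "('a::finite \<Rightarrow> 'x::finite \<Rightarrow> real) set" and f :: "'t::finite \<Rightarrow> 'a \<Rightarrow> 'x \<Rightarrow> real"
  assumes Q_convex: "\<forall>p1\<in>Q. \<forall>p2\<in>Q. \<forall>q\<in>{0..1}. (\<lambda>a x. q * p1 a x + (1 - q) * p2 a x) \<in> Q"
    and RB: "RB_function Q f Xr H"
  shows "m \<ge> 1 \<Longrightarrow> (\<forall>j<m. P j \<in> Q) \<Longrightarrow>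
    (\<lambda>a x. (1/real m) * (\<Sum>j<m. P j a x)) \<in> Q \<and>
    real m * H (bell_vec f (\<lambda>a x. (1/real m) * (\<Sum>j<m. P j a x))) \<le> (\<Sum>j<m. H (bell_vec f (P j)))"
proof (induction m)
  case 0 then show ?case by simp
next
  case (Suc m)
  show ?case
  proof (cases "m = 0")
    case True
    have e: "(\<lambda>a x. (1/real (Suc m)) * (\<Sum>j<Suc m. P j a x)) = P 0" using True by simp
    show ?thesis unfolding e using Suc.prems True by simp
  next
    case False
    define A where "A = (\<lambda>a x. (1/real m) * (\<Sum>j<m. P j a x))"
    define q where "q = real m / real (Suc m)"
    from Suc.IH False Suc.prems have IH: "A \<in> Q" "real m * H (bell_vec f A) \<le> (\<Sum>j<m. H (bell_vec f (P j)))"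
      unfolding A_def by auto
    have Pm: "P m \<in> Q" using Suc.prems by simp
    have q01: "q \<in> {0..1}" unfolding q_def by simp
    have e: "(\<lambda>a x. (1/real (Suc m)) * (\<Sum>j<Suc m. P j a x)) = (\<lambda>a x. q * A a x + (1 - q) * P m a x)"
    proof (intro ext)
      fix a x
      have m0: "real m > 0" using False by simp
      have e1: "q * A a x = (\<Sum>j<m. P j a x) / real (Suc m)" unfolding A_def q_def using m0 by (simp add: divide_simps)
      have e2: "1 - q = 1 / real (Suc m)" unfolding q_def by (simp add: field_simps)
      have "q * A a x + (1 - q) * P m a x = (\<Sum>j<m. P j a x) / real (Suc m) + P m a x / real (Suc m)"
        unfolding e1 e2 by simp
      also have "\<dots> = (1/real (Suc m)) * (\<Sum>j<Suc m. P j a x)" by (simp add: add_divide_distrib)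
      finally show "(1/real (Suc m)) * (\<Sum>j<Suc m. P j a x) = q * A a x + (1 - q) * P m a x" by simp
    qed
    have inQ: "(\<lambda>a x. q * A a x + (1 - q) * P m a x) \<in> Q" using Q_convex IH(1) Pm q01 by blast
    have "H (bell_vec f (\<lambda>a x. q * A a x + (1 - q) * P m a x))
        = H (q *\<^sub>R bell_vec f A + (1 - q) *\<^sub>R bell_vec f (P m))" by (simp add: bell_lin)
    also have "\<dots> \<le> q * H (bell_vec f A) + (1 - q) * H (bell_vec f (P m))"
      using RB IH(1) Pm q01 unfolding RB_function_def by blast
    finally have h: "H (bell_vec f (\<lambda>a x. q * A a x + (1 - q) * P m a x)) \<le> q * H (bell_vec f A) + (1 - q) * H (bell_vec f (P m))" .
    have "real (Suc m) * (q * H (bell_vec f A) + (1 - q) * H (bell_vec f (P m)))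
        = real m * H (bell_vec f A) + H (bell_vec f (P m))"
    proof -
      have a: "real (Suc m) * q = real m" unfolding q_def by simp
      have b: "real (Suc m) * (1 - q) = 1" unfolding q_def by (simp add: field_simps)
      have "real (Suc m) * (q * H (bell_vec f A) + (1 - q) * H (bell_vec f (P m)))
          = (real (Suc m) * q) * H (bell_vec f A) + (real (Suc m) * (1 - q)) * H (bell_vec f (P m))"
        by (simp only: distrib_left mult.assoc)
      then show ?thesis unfolding a b by simp
    qed
    then have "real (Suc m) * H (bell_vec f (\<lambda>a x. q * A a x + (1 - q) * P m a x))
         \<le> real m * H (bell_vec f A) + H (bell_vec f (P m))"
      using mult_left_mono[OF h, of "real (Suc m)"] by simp
    then show ?thesis unfolding e using inQ IH(2) by simp
  qed
qed


theorem lemma3: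
  fixes Q :: "('a::finite \<Rightarrow> 'x::finite \<Rightarrow> real) set"
    and f :: "'t::finite \<Rightarrow> 'a \<Rightarrow> 'x \<Rightarrow> real"
    and Xr :: "'x set"
    and H :: "real^'t \<Rightarrow> real"
    and HV :: "(real^'t) set \<Rightarrow> real"
    and \<eta> :: real
    and \<pi> :: "'x \<Rightarrow> real"
    and n :: nat
    and \<epsilon> :: real
    and Vr :: "'a list \<Rightarrow> 'x list \<Rightarrow> real \<Rightarrow> (real^'t) set"
    and pp :: "'a list \<Rightarrow> 'x list \<Rightarrow> 'a \<Rightarrow> 'x \<Rightarrow> real"
  assumes Q_behaviors: "\<forall>p\<in>Q. behavior p"
    and Q_convex: "\<forall>p1\<in>Q. \<forall>p2\<in>Q. \<forall>q\<in>{0..1}. (\<lambda>a x. q * p1 a x + (1 - q) * p2 a x) \<in> Q"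
    and RB: "RB_function Q f Xr H"
    and HV: "HV_of Q f H HV"
    and eta: "\<forall>p\<in>Q. H (bell_vec f p) \<le> \<eta>"
    and pi_nonneg: "\<forall>x. 0 \<le> \<pi> x"
    and pi_sum: "(\<Sum>x\<in>UNIV. \<pi> x) = 1"
    and CR: "confidence_region Q f \<pi> n \<epsilon> Vr"
    and dev: "device_behavior Q n pp"
  shows "\<exists>Pt :: 'x list \<Rightarrow> 'a list option \<Rightarrow> real.
     (\<forall>xs. length xs = n \<longrightarrow>
        (\<forall>oc\<in>outcomes n. 0 \<le> Pt xs oc) \<and> (\<Sum>oc\<in>outcomes n. Pt xs oc) = 1)
   \<and> (1 / 2) * (\<Sum>xs\<in>{xs. length xs = n}. \<Sum>oc\<in>outcomes n.
        \<bar>Pt xs oc * input_prob \<pi> xs - ext_prob n pp xs oc * input_prob \<pi> xs\<bar>) \<le> \<epsilon>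
   \<and> (\<forall>xs as. length xs = n \<longrightarrow> length as = n \<longrightarrow>
        ereal (real n * HV (Vr as xs \<epsilon>) - real (nu Xr xs) * \<eta>) \<le> neglog2 (Pt xs (Some as)))"
proof -
  let ?L = "{as::'a list. length as = n}"
  let ?LX = "{xs::'x list. length xs = n}"
  have finL: "finite ?L" by (rule fin_len)
  have finLX: "finite ?LX" by (rule fin_len)
  define inV where "inV as xs \<longleftrightarrow> avg_bell f n pp as xs \<in> Vr as xs \<epsilon>" for as xs
  define SV where "SV xs = (\<Sum>as\<in>{as\<in>?L. inV as xs}. dev_prob n pp as xs)" for xs
  define Pt where "Pt xs oc = (case oc of None \<Rightarrow> 1 - SV xs
      | Some as \<Rightarrow> if inV as xs then dev_prob n pp as xs else 0)" for xs oc
  have inQ: "pp (take j as) (take j xs) \<in> Q" if "length as = n" "length xs = n" "j < n" for as xs j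
    using dev that unfolding device_behavior_def by auto
  have fact_nn: "0 \<le> pp (take j as) (take j xs) a x" "pp (take j as) (take j xs) a x \<le> 1"
    if "length as = n" "length xs = n" "j < n" for as xs j a x
  proof -
    have b: "behavior (pp (take j as) (take j xs))" using inQ[OF that] Q_behaviors by blast
    then show "0 \<le> pp (take j as) (take j xs) a x" unfolding behavior_def by blast
    have "pp (take j as) (take j xs) a x \<le> (\<Sum>a\<in>UNIV. pp (take j as) (take j xs) a x)"
      by (rule member_le_sum) (use b in \<open>auto simp: behavior_def\<close>)
    then show "pp (take j as) (take j xs) a x \<le> 1" using b unfolding behavior_def by simp
  qed
  have dnn: "0 \<le> dev_prob n pp as xs" if "length as = n" "length xs = n" for as xs
    unfolding dev_prob_def by (rule prod_nonneg) (use fact_nn[OF that] in auto)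
  have dsum: "(\<Sum>as\<in>?L. dev_prob n pp as xs) = 1" if "length xs = n" for xs
    using dev_sum[OF Q_behaviors dev, of n xs] that by simp
  have split: "(\<Sum>as\<in>?L. dev_prob n pp as xs) = SV xs + (\<Sum>as\<in>?L. if inV as xs then 0 else dev_prob n pp as xs)" for xs
  proof -
    have "(\<Sum>as\<in>?L. dev_prob n pp as xs) = (\<Sum>as\<in>?L. (if inV as xs then dev_prob n pp as xs else 0) + (if inV as xs then 0 else dev_prob n pp as xs))"
      by (rule sum.cong) auto
    also have "\<dots> = (\<Sum>as\<in>?L. if inV as xs then dev_prob n pp as xs else 0) + (\<Sum>as\<in>?L. if inV as xs then 0 else dev_prob n pp as xs)"
      by (rule sum.distrib)
    also have "(\<Sum>as\<in>?L. if inV as xs then dev_prob n pp as xs else 0) = SV xs"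
      unfolding SV_def using sum.inter_filter[OF finL, of "\<lambda>as. dev_prob n pp as xs" "\<lambda>as. inV as xs"] by simp
    finally show ?thesis .
  qed
  have compl_nn: "0 \<le> (\<Sum>as\<in>?L. if inV as xs then 0 else dev_prob n pp as xs)" if "length xs = n" for xs
    by (rule sum_nonneg) (use dnn that in auto)
  have SV1: "SV xs \<le> 1" if "length xs = n" for xs
    using split[of xs] dsum[OF that] compl_nn[OF that] by linarith
  have compl: "(\<Sum>as\<in>?L. if inV as xs then 0 else dev_prob n pp as xs) = 1 - SV xs" if "length xs = n" for xs
    using split[of xs] dsum[OF that] by linarith
  have osum: "(\<Sum>oc\<in>outcomes n. g oc) = g None + (\<Sum>as\<in>?L. g (Some as))" for g :: "'a list option \<Rightarrow> real"
  proof -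
    have "(\<Sum>oc\<in>outcomes n. g oc) = g None + (\<Sum>oc\<in>Some ` ?L. g oc)"
      unfolding outcomes_def by (subst sum.insert) (use finL in auto)
    also have "(\<Sum>oc\<in>Some ` ?L. g oc) = (\<Sum>as\<in>?L. g (Some as))"
      by (subst sum.reindex) auto
    finally show ?thesis .
  qed
  have ip_nn: "0 \<le> input_prob \<pi> xs" for xs
    unfolding input_prob_def by (induction xs) (auto simp: pi_nonneg)
  have ipsum: "(\<Sum>xs\<in>?LX. input_prob \<pi> xs) = 1" using input_sum[where n=n and \<pi>=\<pi>] pi_sum by simp
  have P1: "\<forall>xs. length xs = n \<longrightarrow> (\<forall>oc\<in>outcomes n. 0 \<le> Pt xs oc) \<and> (\<Sum>oc\<in>outcomes n. Pt xs oc) = 1"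
  proof (intro allI impI conjI)
    fix xs :: "'x list" assume l: "length xs = n"
    show "\<forall>oc\<in>outcomes n. 0 \<le> Pt xs oc"
      unfolding outcomes_def Pt_def using SV1[OF l] dnn l by auto
    have "(\<Sum>oc\<in>outcomes n. Pt xs oc) = 1 - SV xs + (\<Sum>as\<in>?L. if inV as xs then dev_prob n pp as xs else 0)"
      unfolding osum by (simp add: Pt_def)
    also have "(\<Sum>as\<in>?L. if inV as xs then dev_prob n pp as xs else 0) = SV xs"
      unfolding SV_def using sum.inter_filter[OF finL, of "\<lambda>as. dev_prob n pp as xs" "\<lambda>as. inV as xs"] by simp
    finally show "(\<Sum>oc\<in>outcomes n. Pt xs oc) = 1" by simp
  qed
  have inner: "(\<Sum>oc\<in>outcomes n. \<bar>Pt xs oc * input_prob \<pi> xs - ext_prob n pp xs oc * input_prob \<pi> xs\<bar>)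
      = 2 * (input_prob \<pi> xs - input_prob \<pi> xs * SV xs)" if l: "length xs = n" for xs
  proof -
    have "(\<Sum>oc\<in>outcomes n. \<bar>Pt xs oc * input_prob \<pi> xs - ext_prob n pp xs oc * input_prob \<pi> xs\<bar>)
      = (1 - SV xs) * input_prob \<pi> xs + (\<Sum>as\<in>?L. (if inV as xs then 0 else dev_prob n pp as xs) * input_prob \<pi> xs)"
      unfolding osum
    proof (intro arg_cong2[where f="(+)"] sum.cong refl)
      show "\<bar>Pt xs None * input_prob \<pi> xs - ext_prob n pp xs None * input_prob \<pi> xs\<bar> = (1 - SV xs) * input_prob \<pi> xs"
        using SV1[OF l] ip_nn[of xs] by (simp add: Pt_def ext_prob_def)
      fix as assume "as \<in> ?L"
      then show "\<bar>Pt xs (Some as) * input_prob \<pi> xs - ext_prob n pp xs (Some as) * input_prob \<pi> xs\<bar> =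
         (if inV as xs then 0 else dev_prob n pp as xs) * input_prob \<pi> xs"
        using dnn[of as xs] l ip_nn[of xs] by (simp add: Pt_def ext_prob_def)
    qed
    also have "\<dots> = (1 - SV xs) * input_prob \<pi> xs + (1 - SV xs) * input_prob \<pi> xs"
      by (simp add: sum_distrib_right[symmetric] compl[OF l])
    finally show ?thesis by (simp add: algebra_simps)
  qed
  have CRs: "(\<Sum>(as, xs) \<in> {(as, xs). length as = n \<and> length xs = n \<and> avg_bell f n pp as xs \<in> Vr as xs \<epsilon>}.
            dev_prob n pp as xs * input_prob \<pi> xs) \<ge> 1 - \<epsilon>"
    using CR dev unfolding confidence_region_def by blast
  have Vsum: "(\<Sum>(as, xs) \<in> {(as, xs). length as = n \<and> length xs = n \<and> avg_bell f n pp as xs \<in> Vr as xs \<epsilon>}.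
            dev_prob n pp as xs * input_prob \<pi> xs) = (\<Sum>xs\<in>?LX. input_prob \<pi> xs * SV xs)"
  proof -
    have e: "{(as, xs). length as = n \<and> length xs = n \<and> avg_bell f n pp as xs \<in> Vr as xs \<epsilon>}
        = {p \<in> ?L \<times> ?LX. inV (fst p) (snd p)}" by (auto simp: inV_def)
    have "(\<Sum>(as, xs) \<in> {p \<in> ?L \<times> ?LX. inV (fst p) (snd p)}. dev_prob n pp as xs * input_prob \<pi> xs)
        = (\<Sum>p \<in> ?L \<times> ?LX. if inV (fst p) (snd p) then dev_prob n pp (fst p) (snd p) * input_prob \<pi> (snd p) else 0)"
      by (subst sum.inter_filter) (use finL finLX in \<open>auto intro!: sum.cong simp: split_beta\<close>)
    also have "\<dots> = (\<Sum>as\<in>?L. \<Sum>xs\<in>?LX. if inV as xs then dev_prob n pp as xs * input_prob \<pi> xs else 0)"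
      by (subst sum.cartesian_product) (simp add: case_prod_unfold)
    also have "\<dots> = (\<Sum>xs\<in>?LX. \<Sum>as\<in>?L. if inV as xs then dev_prob n pp as xs * input_prob \<pi> xs else 0)"
      by (rule sum.swap)
    also have "\<dots> = (\<Sum>xs\<in>?LX. input_prob \<pi> xs * SV xs)"
    proof (rule sum.cong[OF refl])
      fix xs
      have "(\<Sum>as\<in>?L. if inV as xs then dev_prob n pp as xs * input_prob \<pi> xs else 0)
          = (\<Sum>as\<in>{as\<in>?L. inV as xs}. dev_prob n pp as xs * input_prob \<pi> xs)"
        using sum.inter_filter[OF finL, of "\<lambda>as. dev_prob n pp as xs * input_prob \<pi> xs" "\<lambda>as. inV as xs"] by simp
      then show "(\<Sum>as\<in>?L. if inV as xs then dev_prob n pp as xs * input_prob \<pi> xs else 0) = input_prob \<pi> xs * SV xs"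
        by (simp add: SV_def sum_distrib_left sum_distrib_right mult.commute)
    qed
    finally show ?thesis unfolding e .
  qed
  have P2: "(1 / 2) * (\<Sum>xs\<in>?LX. \<Sum>oc\<in>outcomes n.
        \<bar>Pt xs oc * input_prob \<pi> xs - ext_prob n pp xs oc * input_prob \<pi> xs\<bar>) \<le> \<epsilon>"
  proof -
    have "(\<Sum>xs\<in>?LX. \<Sum>oc\<in>outcomes n.
        \<bar>Pt xs oc * input_prob \<pi> xs - ext_prob n pp xs oc * input_prob \<pi> xs\<bar>)
        = (\<Sum>xs\<in>?LX. 2 * (input_prob \<pi> xs - input_prob \<pi> xs * SV xs))"
      by (rule sum.cong) (auto simp: inner)
    also have "\<dots> = 2 * (1 - (\<Sum>xs\<in>?LX. input_prob \<pi> xs * SV xs))"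
      by (simp add: sum_distrib_left[symmetric] sum_subtractf ipsum)
    finally show ?thesis using CRs Vsum by simp
  qed
  have P3: "ereal (real n * HV (Vr as xs \<epsilon>) - real (nu Xr xs) * \<eta>) \<le> neglog2 (Pt xs (Some as))"
    if la: "length as = n" and lx: "length xs = n" for xs as
  proof (cases "inV as xs \<and> dev_prob n pp as xs \<noteq> 0")
    case False
    then have "Pt xs (Some as) = 0" by (auto simp: Pt_def)
    then show ?thesis by (simp add: neglog2_def)
  next
    case True
    then have Pt_eq: "Pt xs (Some as) = dev_prob n pp as xs" by (simp add: Pt_def)
    define c where "c j = pp (take j as) (take j xs) (as ! j) (xs ! j)" for j
    have dp: "dev_prob n pp as xs = (\<Prod>j<n. c j)" unfolding dev_prob_def c_def by simp
    have cpos: "\<forall>j\<in>{..<n}. 0 < c j"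
    proof
      fix j assume j: "j \<in> {..<n}"
      have "c j \<noteq> 0" using True dp j by auto
      moreover have "0 \<le> c j" unfolding c_def using fact_nn la lx j by auto
      ultimately show "0 < c j" by simp
    qed
    have nl: "neglog2 (Pt xs (Some as)) = ereal (- (\<Sum>j<n. log 2 (c j)))"
      unfolding Pt_eq neglog2_def using True dp log_prod[OF cpos, of 2] by simp
    have each: "H (bell_vec f (pp (take j as) (take j xs))) - (if xs ! j \<notin> Xr then \<eta> else 0) \<le> - log 2 (c j)"
      if j: "j < n" for j
    proof (cases "xs ! j \<in> Xr")
      case True
      have "ereal (H (bell_vec f (pp (take j as) (take j xs)))) \<le> neglog2 (c j)"
        using RB inQ[OF la lx j] True unfolding RB_function_def c_def by blast
      moreover have "c j \<noteq> 0" using cpos j by (metis lessThan_iff less_irrefl)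
      ultimately show ?thesis using True by (simp add: neglog2_def)
    next
      case False
      have "c j \<le> 1" unfolding c_def using fact_nn la lx j by auto
      then have "log 2 (c j) \<le> 0" using cpos j by (simp add: log_le_zero_cancel_iff)
      moreover have "H (bell_vec f (pp (take j as) (take j xs))) \<le> \<eta>" using eta inQ[OF la lx j] by blast
      ultimately show ?thesis using False by simp
    qed
    have sumif: "(\<Sum>j<n. if xs ! j \<notin> Xr then \<eta> else 0) = real (nu Xr xs) * \<eta>"
    proof -
      have "(\<Sum>j<n. if xs ! j \<notin> Xr then \<eta> else 0) = (\<Sum>j\<in>{j\<in>{..<n}. xs ! j \<notin> Xr}. \<eta>)"
        using sum.inter_filter[of "{..<n}" "\<lambda>_. \<eta>" "\<lambda>j. xs ! j \<notin> Xr"] by simp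
      also have "{j\<in>{..<n}. xs ! j \<notin> Xr} = {j. j < length xs \<and> xs ! j \<notin> Xr}" using lx by auto
      finally show ?thesis by (simp add: nu_def)
    qed
    have sumH: "(\<Sum>j<n. H (bell_vec f (pp (take j as) (take j xs)))) - real (nu Xr xs) * \<eta> \<le> - (\<Sum>j<n. log 2 (c j))"
    proof -
      have "(\<Sum>j<n. H (bell_vec f (pp (take j as) (take j xs))) - (if xs ! j \<notin> Xr then \<eta> else 0))
          \<le> (\<Sum>j<n. - log 2 (c j))" by (rule sum_mono) (use each in auto)
      then show ?thesis by (simp add: sum_subtractf sumif sum_negf)
    qed
    show ?thesis
    proof (cases "n = 0")
      case True
      then show ?thesis using nl sumH by simp
    next
      case False
      define avgp where "avgp = (\<lambda>a x. (1/real n) * (\<Sum>j<n. pp (take j as) (take j xs) a x))"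
      have J: "avgp \<in> Q \<and> real n * H (bell_vec f avgp) \<le> (\<Sum>j<n. H (bell_vec f (pp (take j as) (take j xs))))"
        unfolding avgp_def
        by (rule jensen[OF Q_convex RB, of n "\<lambda>j. pp (take j as) (take j xs)"]) (use False inQ[OF la lx] in auto)
      have avg: "avg_bell f n pp as xs = bell_vec f avgp"
        unfolding avgp_def bell_avg avg_bell_def by simp
      have "bell_vec f avgp \<in> bell_vec f ` Q \<inter> Vr as xs \<epsilon>"
        using J True avg unfolding inV_def by auto
      then have "HV (Vr as xs \<epsilon>) \<le> H (bell_vec f avgp)" using HV unfolding HV_of_def by blast
      then have "real n * HV (Vr as xs \<epsilon>) \<le> real n * H (bell_vec f avgp)" by (simp add: mult_left_mono)
      then show ?thesis using J sumH nl by simp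
    qed
  qed
  show ?thesis using P1 P2 P3 by blast
qed

end
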